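(* Let $\sigma,b$ and $x$ be as in the context. There exist $C\in\mathcal{C}$ and $\delta^*\in1/\mathcal{C}$ such that for all $\delta\le\delta^*$ and all $\xi\in\mathbb{R}^2$, \[ \frac1C|\xi|_{A_\delta(x)}\le|\xi|_{\bar A_\delta(x)}\le C|\xi|_{A_\delta(x)}\quad\text{and}\quad\frac1C|\xi|_{A_\delta(x)}\le|\xi|_{A_\delta(\hat x)}\le C|\xi|_{A_\delta(x)}, \] where $\hat x=x+\delta b(x)$.
   Context: $\sigma,b:\mathbb{R}^2\to\mathbb{R}^2$ are $C^3$; $\partial_gf=\sum_ig^i\partial_{x_i}f$, $[f,g]=\partial_gf-\partial_fg$. $A_\delta(y)$ is the matrix with columns $\delta^{1/2}\sigma(y),\delta^{3/2}[b,\sigma](y)$; $\bar A_\delta(x)$ has columns $\delta^{1/2}(\sigma(x)+\delta\partial_b\sigma(x))$, $\delta^{3/2}[b,\sigma](x)$; for an invertible $2\times2$ matrix $M$, $|\xi|_M=|M^{-1}\xi|$. $\lambda(y)$ is the smallest eigenvalue of $A(y)A(y)^T$ where $A(y)$ has columns $\sigma(y),[b,\sigma](y)$; $n(y)=\sum_{k=0}^3\sum_{|\alpha|=k}(|\partial^\alpha b(y)|+|\partial^\alpha\sigma(y)|)$. Local hypotheses: $\lambda(y)\ge\Lambda\in(0,1]$ and $n(y)\le N$ (with $N\ge1$) for $|y-x|<1$; there is a differentiable $\kappa_\sigma$ with $\partial_\sigma\sigma=\kappa_\sigma\sigma$, $|\kappa_\sigma|,|\nabla\kappa_\sigma|\le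 n$. $\mathcal{C}=\{K(N/\Lambda)^q:K,q\ge1\text{ universal}\}$, $1/\mathcal{C}=\{c:1/c\in\mathcal{C}\}$. *)

theory Defs
  imports "HOL-Analysis.Analysis"
begin

type_synonym R2 = "real ^ 2"

definition pd :: "2 \<Rightarrow> (R2 \<Rightarrow> 'b::real_normed_vector) \<Rightarrow> R2 \<Rightarrow> 'b" where
  "pd i f = (\<lambda>y. frechet_derivative f (at y) (axis i 1))"

fun dlist :: "2 list \<Rightarrow> (R2 \<Rightarrow> 'b::real_normed_vector) \<Rightarrow> R2 \<Rightarrow> 'b" where
  "dlist [] f = f"
| "dlist (i # is) f = pd i (dlist is f)"

definition C3 :: "(R2 \<Rightarrow> 'b::real_normed_vector) \<Rightarrow> bool" where
  "C3 f \<longleftrightarrow> (\<forall>is. length is < 3 \<longrightarrow> (\<forall>y. dlist is f differentiable (at y)))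
           \<and> (\<forall>is. length is \<le> 3 \<longrightarrow> continuous_on UNIV (dlist is f))"

definition dalpha :: "nat \<times> nat \<Rightarrow> (R2 \<Rightarrow> 'b::real_normed_vector) \<Rightarrow> R2 \<Rightarrow> 'b" where
  "dalpha \<alpha> f = dlist (replicate (fst \<alpha>) 1 @ replicate (snd \<alpha>) 2) f"

definition lie :: "(R2 \<Rightarrow> R2) \<Rightarrow> (R2 \<Rightarrow> R2) \<Rightarrow> R2 \<Rightarrow> R2" where
  "lie g f = (\<lambda>y. \<Sum>i\<in>UNIV. (g y $ i) *\<^sub>R pd i f y)"

definition bracket :: "(R2 \<Rightarrow> R2) \<Rightarrow> (R2 \<Rightarrow> R2) \<Rightarrow> R2 \<Rightarrow> R2" where
  "bracket f g = (\<lambda>y. lie g f y - lie f g y)"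

definition cols2 :: "R2 \<Rightarrow> R2 \<Rightarrow> real ^ 2 ^ 2" where
  "cols2 c1 c2 = (\<chi> i j. if j = 1 then c1 $ i else c2 $ i)"

definition Amat :: "(R2 \<Rightarrow> R2) \<Rightarrow> (R2 \<Rightarrow> R2) \<Rightarrow> R2 \<Rightarrow> real ^ 2 ^ 2" where
  "Amat \<sigma> b y = cols2 (\<sigma> y) (bracket b \<sigma> y)"

definition Adelta :: "(R2 \<Rightarrow> R2) \<Rightarrow> (R2 \<Rightarrow> R2) \<Rightarrow> real \<Rightarrow> R2 \<Rightarrow> real ^ 2 ^ 2" where
  "Adelta \<sigma> b \<delta> y = cols2 (\<delta> powr (1/2) *\<^sub>R \<sigma> y) (\<delta> powr (3/2) *\<^sub>R bracket b \<sigma> y)"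

definition Abar :: "(R2 \<Rightarrow> R2) \<Rightarrow> (R2 \<Rightarrow> R2) \<Rightarrow> real \<Rightarrow> R2 \<Rightarrow> real ^ 2 ^ 2" where
  "Abar \<sigma> b \<delta> x = cols2 (\<delta> powr (1/2) *\<^sub>R (\<sigma> x + \<delta> *\<^sub>R lie b \<sigma> x))
                          (\<delta> powr (3/2) *\<^sub>R bracket b \<sigma> x)"

definition mnorm :: "real ^ 2 ^ 2 \<Rightarrow> R2 \<Rightarrow> real" where
  "mnorm M \<xi> = norm (matrix_inv M *v \<xi>)"

definition lam :: "(R2 \<Rightarrow> R2) \<Rightarrow> (R2 \<Rightarrow> R2) \<Rightarrow> R2 \<Rightarrow> real" where
  "lam \<sigma> b y = Min {t. \<exists>v. v \<noteq> 0 \<and> (Amat \<sigma> b y ** transpose (Amat \<sigma> b y)) *v v = t *\<^sub>R v}"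

definition nfun :: "(R2 \<Rightarrow> R2) \<Rightarrow> (R2 \<Rightarrow> R2) \<Rightarrow> R2 \<Rightarrow> real" where
  "nfun \<sigma> b y = (\<Sum>k\<le>3. \<Sum>\<alpha>\<in>{\<alpha>::nat\<times>nat. fst \<alpha> + snd \<alpha> = k}.
                    norm (dalpha \<alpha> b y) + norm (dalpha \<alpha> \<sigma> y))"

definition grad :: "(R2 \<Rightarrow> real) \<Rightarrow> R2 \<Rightarrow> R2" where
  "grad f y = (\<chi> i. pd i f y)"

end

theory Submission
  imports Defs
begin

definition det2 :: "R2 \<Rightarrow> R2 \<Rightarrow> real" where "det2 a b = a$1 * b$2 - a$2 * b$1"

lemma det_cols2: "det (cols2 a b) = det2 a b"
  by (simp add: det_2 cols2_def det2_def)

lemma cols2_mulv: "cols2 a b *v v = v$1 *\<^sub>R a + v$2 *\<^sub>R b"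
  by (simp add: vec_eq_iff cols2_def matrix_vector_mult_def sum_2 forall_2 mult.commute)

lemma minv: assumes "invertible (A::real^2^2)"
  shows "A ** matrix_inv A = mat 1" "matrix_inv A ** A = mat 1"
  using someI_ex[OF assms[unfolded invertible_def]] unfolding matrix_inv_def by auto

lemma mnorm_cmp:
  fixes M P Q :: "real^2^2"
  assumes "invertible M" "invertible P" "M ** Q = P" "\<And>v. norm (Q *v v) \<le> B * norm v"
  shows "mnorm M \<xi> \<le> B * mnorm P \<xi>"
proof -
  have "matrix_inv M *v \<xi> = matrix_inv M *v (P *v (matrix_inv P *v \<xi>))"
    by (simp add: matrix_vector_mul_assoc minv assms)
  also have "\<dots> = Q *v (matrix_inv P *v \<xi>)"
    by (simp add: matrix_vector_mul_assoc minv assms(1) assms(3)[symmetric] matrix_mul_assoc)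
  finally show ?thesis unfolding mnorm_def using assms(4) by simp
qed

lemma det2_bound: "\<bar>det2 a b\<bar> \<le> 2 * norm a * norm b"
proof -
  have "\<bar>a$i * b$j\<bar> \<le> norm a * norm b" for i j
    unfolding abs_mult by (intro mult_mono component_le_norm_cart) auto
  from this[of 1 2] this[of 2 1] show ?thesis unfolding det2_def by linarith
qed

lemma det2_boundK: "norm a \<le> K \<Longrightarrow> norm b \<le> K' \<Longrightarrow> \<bar>det2 a b\<bar> \<le> 2 * K * K'"
proof -
  assume "norm a \<le> K" "norm b \<le> K'"
  hence "norm a * norm b \<le> K * K'" by (intro mult_mono) (auto intro: order_trans[OF norm_ge_zero])
  thus ?thesis using det2_bound[of a b] by linarith
qed

lemma det2_sub: "det2 a b - det2 a' b' = det2 (a - a') b + det2 a' (b - b')"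
  by (simp add: det2_def algebra_simps)

lemma det2_diff_right: "det2 s s' = det2 s (s' - s)"
  by (simp add: det2_def algebra_simps)

definition mk2 :: "real \<Rightarrow> real \<Rightarrow> R2" where "mk2 x y = (\<chi> i. if i = 1 then x else y)"

lemma mk2_simps[simp]: "mk2 x y $ 1 = x" "mk2 x y $ 2 = y"
  by (simp_all add: mk2_def)

lemma norm_le_2: "norm (v::R2) \<le> \<bar>v$1\<bar> + \<bar>v$2\<bar>"
  using norm_le_l1_cart[of v] by (simp add: sum_2)

lemma cols2_norm_bound:
  "norm (cols2 q1 q2 *v v) \<le> (\<bar>q1$1\<bar> + \<bar>q1$2\<bar> + \<bar>q2$1\<bar> + \<bar>q2$2\<bar>) * norm v"
proof -
  have "norm (cols2 q1 q2 *v v) \<le> \<bar>v$1\<bar> * norm q1 + \<bar>v$2\<bar> * norm q2"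
    unfolding cols2_mulv by (metis norm_scaleR norm_triangle_ineq)
  also have "\<dots> \<le> norm v * (\<bar>q1$1\<bar> + \<bar>q1$2\<bar>) + norm v * (\<bar>q2$1\<bar> + \<bar>q2$2\<bar>)"
    by (intro add_mono mult_mono component_le_norm_cart norm_le_2) auto
  finally show ?thesis by (simp add: algebra_simps)
qed

lemma cols2_mult:
  "cols2 u1 u2 ** cols2 q1 q2 = cols2 (cols2 u1 u2 *v q1) (cols2 u1 u2 *v q2)"
  by (simp add: vec_eq_iff forall_2 cols2_def matrix_matrix_mult_def matrix_vector_mult_def sum_2)

lemma divb: fixes x B L D :: real assumes "\<bar>x\<bar> \<le> B" "L \<le> \<bar>D\<bar>" "0 < L" shows "\<bar>x / D\<bar> \<le> B / L"
proof -
  have "\<bar>x\<bar> / \<bar>D\<bar> \<le> B / \<bar>D\<bar>" by (rule divide_right_mono[OF assms(1) abs_ge_zero])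
  also have "\<dots> \<le> B / L" using assms by (smt (verit) divide_left_mono mult_pos_pos)
  finally show ?thesis by (simp add: abs_divide)
qed

lemma e1: assumes "D = det2 s c" "D \<noteq> 0" "\<delta> \<noteq> 0"
  shows "cols2 (a *\<^sub>R s) ((\<delta> * a) *\<^sub>R c) *v mk2 (det2 s' c / D) (det2 s s' / (\<delta> * D)) = a *\<^sub>R s'"
  using assms unfolding cols2_mulv by (simp add: vec_eq_iff forall_2 det2_def field_simps) algebra
lemma e2: assumes "D = det2 s c" "D \<noteq> 0" "\<delta> \<noteq> 0"
  shows "cols2 (a *\<^sub>R s) ((\<delta> * a) *\<^sub>R c) *v mk2 (\<delta> * det2 c' c / D) (det2 s c' / D) = (\<delta> * a) *\<^sub>R c'"
  using assms unfolding cols2_mulv by (simp add: vec_eq_iff forall_2 det2_def field_simps) algebra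

lemma core0:
  fixes s c s' c' :: R2
  assumes D: "\<bar>det2 s c\<bar> \<ge> L" "L > 0" and D': "det2 s' c' \<noteq> 0"
    and K: "norm s \<le> K" "norm c \<le> K" "norm s' \<le> K" "norm c' \<le> K"
    and E: "norm (s' - s) \<le> E * \<delta>"
    and d: "0 < \<delta>" "\<delta> \<le> 1" and a: "a > 0"
  shows "mnorm (cols2 (a *\<^sub>R s) ((\<delta> * a) *\<^sub>R c)) \<xi>
     \<le> ((6 * K^2 + 2 * K * E) / L) * mnorm (cols2 (a *\<^sub>R s') ((\<delta> * a) *\<^sub>R c')) \<xi>"
proof -
  define D where "D = det2 s c"
  have D0: "D \<noteq> 0" using D unfolding D_def by auto
  have K0: "K \<ge> 0" using K(1) norm_ge_zero order_trans by blast
  define q1 where "q1 = mk2 (det2 s' c / D) (det2 s s' / (\<delta> * D))"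
  define q2 where "q2 = mk2 (\<delta> * det2 c' c / D) (det2 s c' / D)"
  have e1: "cols2 (a *\<^sub>R s) ((\<delta> * a) *\<^sub>R c) *v q1 = a *\<^sub>R s'"
    unfolding q1_def using e1[OF D_def D0] d(1) by simp
  have e2: "cols2 (a *\<^sub>R s) ((\<delta> * a) *\<^sub>R c) *v q2 = (\<delta> * a) *\<^sub>R c'"
    unfolding q2_def using e2[OF D_def D0] d(1) by simp
  have inv1: "invertible (cols2 (a *\<^sub>R s) ((\<delta> * a) *\<^sub>R c))"
    using D0 d a unfolding invertible_det_nz det_cols2 D_def by (simp add: det2_def algebra_simps)
  have inv2: "invertible (cols2 (a *\<^sub>R s') ((\<delta> * a) *\<^sub>R c'))"
    using D' d a unfolding invertible_det_nz det_cols2 by (simp add: det2_def algebra_simps)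
  have LD: "L \<le> \<bar>D\<bar>" using D unfolding D_def by simp
  have b1: "\<bar>q1$1\<bar> \<le> 2 * K^2 / L"
    unfolding q1_def using divb[OF det2_boundK[OF K(3) K(2)] LD D(2)] by (simp add: power2_eq_square)
  have b2: "\<bar>q1$2\<bar> \<le> 2 * K * E / L"
  proof -
    have "\<bar>det2 s s'\<bar> \<le> 2 * K * (E * \<delta>)"
      unfolding det2_diff_right[of s s'] by (rule det2_boundK[OF K(1) E])
    hence "\<bar>det2 s s' / \<delta>\<bar> \<le> 2 * K * E" using d by (simp add: abs_divide field_simps)
    from divb[OF this LD D(2)] show ?thesis unfolding q1_def by (simp add: field_simps)
  qed
  have b3: "\<bar>q2$1\<bar> \<le> 2 * K^2 / L"
  proof -
    have "\<bar>\<delta> * det2 c' c\<bar> \<le> 2 * K * K"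
      using det2_boundK[OF K(4) K(2)] d unfolding abs_mult
      by (smt (verit) abs_ge_zero mult_left_le_one_le)
    from divb[OF this LD D(2)] show ?thesis unfolding q2_def by (simp add: power2_eq_square)
  qed
  have b4: "\<bar>q2$2\<bar> \<le> 2 * K^2 / L"
    unfolding q2_def using divb[OF det2_boundK[OF K(1) K(4)] LD D(2)] by (simp add: power2_eq_square)
  have "cols2 (a *\<^sub>R s) ((\<delta> * a) *\<^sub>R c) ** cols2 q1 q2 = cols2 (a *\<^sub>R s') ((\<delta> * a) *\<^sub>R c')"
    unfolding cols2_mult e1 e2 ..
  moreover have "norm (cols2 q1 q2 *v v) \<le> ((6 * K^2 + 2 * K * E) / L) * norm v" for v
  proof -
    have "\<bar>q1$1\<bar> + \<bar>q1$2\<bar> + \<bar>q2$1\<bar> + \<bar>q2$2\<bar> \<le> (6 * K^2 + 2 * K * E) / L"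
      using b1 b2 b3 b4 by (simp add: add_divide_distrib)
    thus ?thesis using cols2_norm_bound[of q1 q2 v] by (meson mult_right_mono norm_ge_zero order_trans)
  qed
  ultimately show ?thesis by (rule mnorm_cmp[OF inv1 inv2])
qed
lemma eig_char:
  fixes p q r t v1 v2 :: real
  assumes "(p - t)* v1 + q* v2 = 0" "q* v1 + (r-t)* v2 = 0" "v1 \<noteq> 0 \<or> v2 \<noteq> 0"
  shows "(p - t)*(r-t) = q^2"
proof -
  have "((p - t)*(r-t) - q^2) * v1 = (r-t)*((p - t)* v1 + q* v2) - q*(q* v1 + (r-t)* v2)"
    by (simp add: algebra_simps power2_eq_square)
  moreover have "((p - t)*(r-t) - q^2) * v2 = (p-t)*(q* v1 + (r-t)* v2) - q*((p - t)* v1 + q* v2)"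
    by (simp add: algebra_simps power2_eq_square)
  ultimately show ?thesis using assms by auto
qed

lemma eig_ex:
  fixes p q r t :: real
  assumes "(p - t)*(r-t) = q^2"
  shows "\<exists>v1 v2. (v1 \<noteq> 0 \<or> v2 \<noteq> 0) \<and> (p - t)* v1 + q* v2 = 0 \<and> q* v1 + (r-t)* v2 = 0"
proof (cases "q = 0 \<and> t = p")
  case True
  then show ?thesis by (intro exI[of _ 1] exI[of _ 0]) auto
next
  case False
  then show ?thesis
  proof (cases "q = 0")
    case True
    with False assms have "t = r" by (simp add: power2_eq_square)
    then show ?thesis using True by (intro exI[of _ 0] exI[of _ 1]) auto
  next
    case False
    then show ?thesis using assms
      by (intro exI[of _ q] exI[of _ "t - p"]) (auto simp: algebra_simps power2_eq_square)
  qed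
qed

lemma sq_eq_sqrt:
  fixes x d :: real assumes "d \<ge> 0"
  shows "x^2 = d \<longleftrightarrow> x = sqrt d \<or> x = - sqrt d"
proof
  assume "x^2 = d"
  hence "\<bar>x\<bar> = sqrt d" using real_sqrt_abs by metis
  thus "x = sqrt d \<or> x = - sqrt d" by (auto simp: abs_if split: if_splits)
next
  assume "x = sqrt d \<or> x = - sqrt d"
  thus "x^2 = d" using assms by auto
qed

lemma quad_roots:
  fixes p q r t :: real
  shows "(p - t)*(r-t) = q^2 \<longleftrightarrow>
     t = (p + r + sqrt ((p-r)^2 + 4*q^2)) / 2 \<or> t = (p + r - sqrt ((p-r)^2 + 4*q^2)) / 2"
proof -
  define d where "d = (p-r)^2 + 4*q^2"
  have d0: "d \<ge> 0" unfolding d_def by simp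
  have "(p - t)*(r-t) = q^2 \<longleftrightarrow> (2*t - (p+r))^2 = d"
    unfolding d_def by (simp add: algebra_simps power2_eq_square) (auto simp: algebra_simps)
  also have "\<dots> \<longleftrightarrow> 2*t - (p+r) = sqrt d \<or> 2*t - (p+r) = - sqrt d"
    using sq_eq_sqrt[OF d0] .
  also have "\<dots> \<longleftrightarrow> t = (p + r + sqrt d) / 2 \<or> t = (p + r - sqrt d) / 2"
    by auto
  finally show ?thesis unfolding d_def .
qed

lemma lam_det:
  fixes M :: "real^2^2"
  assumes L: "0 < L" "L \<le> Min {t. \<exists>v. v \<noteq> 0 \<and> (M ** transpose M) *v v = t *\<^sub>R v}"
  shows "L \<le> \<bar>det M\<bar>"
proof -
  define S where "S = M ** transpose M"
  define p where "p = S$1$1"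
  define q where "q = S$1$2"
  define r where "r = S$2$2"
  have q': "S$2$1 = q" unfolding q_def S_def
    by (simp add: matrix_matrix_mult_def transpose_def sum_2 mult.commute)
  have Sv: "S *v v = t *\<^sub>R v \<longleftrightarrow> (p - t)* v$1 + q* v$2 = 0 \<and> q* v$1 + (r-t)* v$2 = 0" for v t
    using q' unfolding q_def
    by (auto simp: p_def r_def vec_eq_iff forall_2 matrix_vector_mult_def sum_2 algebra_simps)
  define d where "d = (p-r)^2 + 4*q^2"
  define r1 where "r1 = (p + r + sqrt d) / 2"
  define r2 where "r2 = (p + r - sqrt d) / 2"
  define T where "T = {t. \<exists>v. v \<noteq> 0 \<and> S *v v = t *\<^sub>R v}"
  have v0: "v \<noteq> 0 \<longleftrightarrow> v$1 \<noteq> 0 \<or> v$2 \<noteq> 0" for v :: R2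
    by (auto simp: vec_eq_iff forall_2)
  have memT: "t \<in> T \<longleftrightarrow> (p - t)*(r-t) = q^2" for t
  proof
    assume "t \<in> T"
    then obtain v where "v \<noteq> 0" "S *v v = t *\<^sub>R v" unfolding T_def by auto
    then show "(p - t)*(r-t) = q^2" using eig_char[of p t "v$1" q "v$2" r] Sv[of v t] v0[of v] by blast
  next
    assume "(p - t)*(r-t) = q^2"
    then obtain v1 v2 where "(v1 \<noteq> 0 \<or> v2 \<noteq> 0)" "(p - t)* v1 + q* v2 = 0" "q* v1 + (r-t)* v2 = 0"
      using eig_ex by blast
    then show "t \<in> T" unfolding T_def
      by (intro CollectI exI[of _ "mk2 v1 v2"]) (auto simp: Sv v0)
  qed
  have Teq: "T = {r1, r2}" using memT quad_roots unfolding r1_def r2_def d_def by (simp add: set_eq_iff)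
  have LT: "L \<le> Min T" using L(2) unfolding T_def S_def .
  have "L \<le> r1" "L \<le> r2" using LT Teq by auto
  hence "L * L \<le> r1 * r2" using L(1) by (intro mult_mono) auto
  also have "r1 * r2 = p * r - q^2"
  proof -
    have "r1 * r2 = ((p+r)^2 - (sqrt d)^2)/4" unfolding r1_def r2_def
      by (simp add: power2_eq_square algebra_simps)
    also have "(sqrt d)^2 = d" unfolding d_def by simp
    finally show ?thesis unfolding d_def by (simp add: power2_eq_square algebra_simps)
  qed
  also have "p * r - q^2 = det S" unfolding det_2 p_def r_def q_def using q'
    by (simp add: power2_eq_square q_def)
  also have "det S = (det M)^2" unfolding S_def det_mul det_transpose by (simp add: power2_eq_square)
  finally have "L^2 \<le> \<bar>det M\<bar>^2" by (simp add: power2_eq_square)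
  thus ?thesis using L(1) by (meson abs_ge_zero power2_le_imp_le)
qed
lemma core_both:
  fixes s c s' c' :: R2
  assumes NL: "1 \<le> N" "0 < \<Lambda>" "\<Lambda> \<le> 1"
    and D: "\<bar>det2 s c\<bar> \<ge> \<Lambda>"
    and K: "norm s \<le> 4*N^2" "norm c \<le> 4*N^2" "norm s' \<le> 4*N^2" "norm c' \<le> 4*N^2"
    and E: "norm (s' - s) \<le> 16*N^3 * \<delta>" "norm (c' - c) \<le> 16*N^3 * \<delta>"
    and d: "0 < \<delta>" "\<delta> \<le> \<Lambda> / (512 * N^5)" and a: "a > 0"
  shows "mnorm (cols2 (a *\<^sub>R s) ((\<delta> * a) *\<^sub>R c)) \<xi>
          \<le> (448 * (N/\<Lambda>)^5) * mnorm (cols2 (a *\<^sub>R s') ((\<delta> * a) *\<^sub>R c')) \<xi>"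
    "mnorm (cols2 (a *\<^sub>R s') ((\<delta> * a) *\<^sub>R c')) \<xi>
          \<le> (448 * (N/\<Lambda>)^5) * mnorm (cols2 (a *\<^sub>R s) ((\<delta> * a) *\<^sub>R c)) \<xi>"
proof -
  have N5: "N^5 \<ge> 1" using NL by simp
  have d1: "\<delta> \<le> 1"
  proof -
    have p: "0 < 512 * N^5" using N5 by linarith
    have "\<Lambda> \<le> 512 * N^5" using N5 NL(3) by linarith
    hence "\<Lambda> / (512 * N^5) \<le> 1" using p by (simp add: divide_le_eq)
    thus ?thesis using d by linarith
  qed
  have dN: "256 * N^5 * \<delta> \<le> \<Lambda> / 2"
    using d(2) NL N5 by (simp add: le_divide_eq algebra_simps)
  have "\<bar>det2 s' c' - det2 s c\<bar> \<le> 2 * (16*N^3*\<delta>) * (4*N^2) + 2 * (4*N^2) * (16*N^3*\<delta>)"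
    unfolding det2_sub using det2_boundK[OF E(1) K(4)] det2_boundK[OF K(1) E(2)] by linarith
  also have "\<dots> = 256 * N^5 * \<delta>" by (simp add: algebra_simps power_add[symmetric] eval_nat_numeral)
  finally have "\<bar>det2 s' c' - det2 s c\<bar> \<le> \<Lambda>/2" using dN by linarith
  hence D': "\<bar>det2 s' c'\<bar> \<ge> \<Lambda>/2" using D by linarith
  have D2: "\<bar>det2 s c\<bar> \<ge> \<Lambda>/2" using D NL by linarith
  have C: "(6 * (4*N^2)^2 + 2 * (4*N^2) * (16*N^3)) / (\<Lambda>/2) \<le> 448 * (N/\<Lambda>)^5"
  proof -
    have "(6 * (4*N^2)^2 + 2 * (4*N^2) * (16*N^3)) / (\<Lambda>/2) = (192 * N^4 + 256 * N^5) / \<Lambda>"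
      using NL by (simp add: field_simps eval_nat_numeral)
    also have "\<dots> \<le> 448 * N^5 / \<Lambda>"
    proof -
      have "N^4 \<le> N^5" using NL by (simp add: power_increasing)
      thus ?thesis using NL by (intro divide_right_mono) auto
    qed
    also have "\<dots> \<le> 448 * N^5 / \<Lambda>^5"
    proof -
      have "\<Lambda>^5 \<le> \<Lambda>" using NL by (simp add: power_le_one_iff power_decreasing[of 1 5 \<Lambda>, simplified])
      moreover have "0 < \<Lambda>^5" using NL by simp
      ultimately show ?thesis using NL by (intro divide_left_mono) auto
    qed
    also have "\<dots> = 448 * (N/\<Lambda>)^5" by (simp add: power_divide)
    finally show ?thesis .
  qed
  have E': "norm (s - s') \<le> 16*N^3 * \<delta>" using E(1) by (simp add: norm_minus_commute)
  show "mnorm (cols2 (a *\<^sub>R s) ((\<delta> * a) *\<^sub>R c)) \<xi>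
          \<le> (448 * (N/\<Lambda>)^5) * mnorm (cols2 (a *\<^sub>R s') ((\<delta> * a) *\<^sub>R c')) \<xi>"
  proof -
    have "det2 s' c' \<noteq> 0" using D' NL by auto
    from core0[OF D2 _ this K E(1) d(1) d1 a, of \<xi>] NL
    have "mnorm (cols2 (a *\<^sub>R s) ((\<delta> * a) *\<^sub>R c)) \<xi>
       \<le> ((6 * (4*N^2)^2 + 2 * (4*N^2) * (16*N^3)) / (\<Lambda>/2)) * mnorm (cols2 (a *\<^sub>R s') ((\<delta> * a) *\<^sub>R c')) \<xi>"
      by simp
    also have "\<dots> \<le> (448 * (N/\<Lambda>)^5) * mnorm (cols2 (a *\<^sub>R s') ((\<delta> * a) *\<^sub>R c')) \<xi>"
      by (intro mult_right_mono C) (simp add: mnorm_def)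
    finally show ?thesis .
  qed
  show "mnorm (cols2 (a *\<^sub>R s') ((\<delta> * a) *\<^sub>R c')) \<xi>
          \<le> (448 * (N/\<Lambda>)^5) * mnorm (cols2 (a *\<^sub>R s) ((\<delta> * a) *\<^sub>R c)) \<xi>"
  proof -
    have "det2 s c \<noteq> 0" using D NL by auto
    from core0[OF D' _ this K(3,4,1,2) E' d(1) d1 a, of \<xi>] NL
    have "mnorm (cols2 (a *\<^sub>R s') ((\<delta> * a) *\<^sub>R c')) \<xi>
       \<le> ((6 * (4*N^2)^2 + 2 * (4*N^2) * (16*N^3)) / (\<Lambda>/2)) * mnorm (cols2 (a *\<^sub>R s) ((\<delta> * a) *\<^sub>R c)) \<xi>"
      by simp
    also have "\<dots> \<le> (448 * (N/\<Lambda>)^5) * mnorm (cols2 (a *\<^sub>R s) ((\<delta> * a) *\<^sub>R c)) \<xi>"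
      by (intro mult_right_mono C) (simp add: mnorm_def)
    finally show ?thesis .
  qed
qed
lemma fd_expand:
  assumes "f differentiable (at y)"
  shows "frechet_derivative f (at y) v = v$1 *\<^sub>R pd 1 f y + v$2 *\<^sub>R pd 2 f y"
proof -
  have lin: "linear (frechet_derivative f (at y))" by (rule linear_frechet_derivative[OF assms])
  have v: "v = v$1 *\<^sub>R axis 1 1 + v$2 *\<^sub>R axis 2 (1::real)"
    by (simp add: vec_eq_iff forall_2 axis_def)
  have "frechet_derivative f (at y) v = frechet_derivative f (at y) (v$1 *\<^sub>R axis 1 1 + v$2 *\<^sub>R axis 2 (1::real))"
    using v by metis
  also have "\<dots> = v$1 *\<^sub>R pd 1 f y + v$2 *\<^sub>R pd 2 f y"
    unfolding pd_def using lin by (simp add: linear_add linear_scale)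
  finally show ?thesis .
qed

lemma fd_axis:
  assumes "f differentiable (at y)"
  shows "frechet_derivative f (at y) (h *\<^sub>R axis i 1) = h *\<^sub>R pd i f y"
proof -
  have lin: "linear (frechet_derivative f (at y))" by (rule linear_frechet_derivative[OF assms])
  thus ?thesis unfolding pd_def by (simp add: linear_scale)
qed

lemma seg_bound:
  fixes g :: "R2 \<Rightarrow> R2"
  assumes S: "convex S" "y \<in> S" "z \<in> S"
    and der: "\<And>w. w \<in> S \<Longrightarrow> (g has_derivative g' w) (at w)"
    and B: "\<And>w. w \<in> S \<Longrightarrow> norm (g' w (z - y)) \<le> B"
  shows "norm (g z - g y) \<le> B"
proof -
  define p where "p = (\<lambda>t::real. y + t *\<^sub>R (z - y))"
  have pS: "p t \<in> S" if "t \<in> {0..1}" for t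
  proof -
    have "p t = (1 - t) *\<^sub>R y + t *\<^sub>R z" unfolding p_def by (simp add: algebra_simps)
    thus ?thesis using S that convexD_alt by fastforce
  qed
  have dp: "(p has_derivative (\<lambda>u. u *\<^sub>R (z - y))) (at t within {0..1})" for t
    unfolding p_def by (auto intro!: derivative_eq_intros)
  have d: "((\<lambda>t. g (p t)) has_derivative (\<lambda>u. g' (p t) (u *\<^sub>R (z - y)))) (at t within {0..1})"
    if "t \<in> {0..1}" for t
    by (rule has_derivative_in_compose[OF dp]) (rule has_derivative_at_withinI[OF der[OF pS[OF that]]])
  have o: "onorm (\<lambda>u. g' (p t) (u *\<^sub>R (z - y))) \<le> B" if "t \<in> {0..1}" for t
  proof (rule onorm_le)
    fix u :: real
    have lin: "linear (g' (p t))" using der[OF pS[OF that]] has_derivative_linear by blast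
    have "norm (g' (p t) (u *\<^sub>R (z - y))) = \<bar>u\<bar> * norm (g' (p t) (z - y))"
      using lin by (simp add: linear_scale)
    also have "\<dots> \<le> \<bar>u\<bar> * B" using B[OF pS[OF that]] by (simp add: mult_left_mono)
    finally show "norm (g' (p t) (u *\<^sub>R (z - y))) \<le> B * norm u" by (simp add: mult.commute)
  qed
  have "norm (g (p 1) - g (p 0)) \<le> B * norm (1 - 0::real)"
    by (rule differentiable_bound[of "{0..1}" _ "\<lambda>t u. g' (p t) (u *\<^sub>R (z - y))"])
       (use d o in auto)
  thus ?thesis unfolding p_def by simp
qed

lemma lip2:
  fixes g :: "R2 \<Rightarrow> R2"
  assumes S: "convex S" "y \<in> S" "z \<in> S"
    and der: "\<And>w. w \<in> S \<Longrightarrow> g differentiable (at w)"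
    and M: "\<And>w. w \<in> S \<Longrightarrow> norm (pd 1 g w) \<le> M" "\<And>w. w \<in> S \<Longrightarrow> norm (pd 2 g w) \<le> M"
  shows "norm (g z - g y) \<le> 2 * M * norm (z - y)"
proof (rule seg_bound[OF S, of g "\<lambda>w. frechet_derivative g (at w)"])
  fix w assume w: "w \<in> S"
  show "(g has_derivative frechet_derivative g (at w)) (at w)"
    using der[OF w] frechet_derivative_works by blast
  have "norm (frechet_derivative g (at w) (z - y))
      \<le> \<bar>(z - y)$1\<bar> * norm (pd 1 g w) + \<bar>(z - y)$2\<bar> * norm (pd 2 g w)"
    unfolding fd_expand[OF der[OF w]] by (metis norm_scaleR norm_triangle_ineq)
  also have "\<dots> \<le> norm (z - y) * M + norm (z - y) * M"
    by (intro add_mono mult_mono component_le_norm_cart M w) auto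
  finally show "norm (frechet_derivative g (at w) (z - y)) \<le> 2 * M * norm (z - y)" by simp
qed

lemma lip1:
  fixes g :: "R2 \<Rightarrow> R2"
  assumes S: "convex S" "y \<in> S" "y + h *\<^sub>R axis i 1 \<in> S"
    and der: "\<And>w. w \<in> S \<Longrightarrow> g differentiable (at w)"
    and M: "\<And>w. w \<in> S \<Longrightarrow> norm (pd i g w) \<le> M"
  shows "norm (g (y + h *\<^sub>R axis i 1) - g y) \<le> \<bar>h\<bar> * M"
proof (rule seg_bound[OF S, of g "\<lambda>w. frechet_derivative g (at w)"])
  fix w assume w: "w \<in> S"
  show "(g has_derivative frechet_derivative g (at w)) (at w)"
    using der[OF w] frechet_derivative_works by blast
  show "norm (frechet_derivative g (at w) (y + h *\<^sub>R axis i 1 - y)) \<le> \<bar>h\<bar> * M"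
    using fd_axis[OF der[OF w], of h i] M[OF w] by (simp add: mult_left_mono)
qed

lemma dq:
  assumes "f differentiable (at z)" "(e::real) > 0"
  shows "\<exists>d>0. \<forall>h. h \<noteq> 0 \<and> \<bar>h\<bar> < d \<longrightarrow>
     norm (f (z + h *\<^sub>R axis i 1) - f z - h *\<^sub>R pd i f z) \<le> e * \<bar>h\<bar>"
proof -
  have "(f has_derivative frechet_derivative f (at z)) (at z)"
    using assms(1) frechet_derivative_works by blast
  hence lim: "(\<lambda>v. norm (f (z + v) - f z - frechet_derivative f (at z) v) / norm v) \<midarrow>0\<rightarrow> 0"
    unfolding has_derivative_at by blast
  then obtain d where d: "d > 0" "\<And>v. v \<noteq> 0 \<Longrightarrow> dist v 0 < d \<Longrightarrow>
      dist (norm (f (z + v) - f z - frechet_derivative f (at z) v) / norm v) 0 < e"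
    using assms(2) unfolding tendsto_iff eventually_at by blast
  show ?thesis
  proof (intro exI[of _ d] conjI allI impI)
    fix h :: real assume h: "h \<noteq> 0 \<and> \<bar>h\<bar> < d"
    have nv: "norm (h *\<^sub>R axis i (1::real)) = \<bar>h\<bar>" by simp
    have "h *\<^sub>R axis i (1::real) \<noteq> 0" using h nv by (metis norm_zero abs_0_eq)
    from d(2)[OF this] h nv
    have "norm (f (z + h *\<^sub>R axis i 1) - f z - h *\<^sub>R pd i f z) / \<bar>h\<bar> < e"
      by (simp add: fd_axis[OF assms(1)])
    thus "norm (f (z + h *\<^sub>R axis i 1) - f z - h *\<^sub>R pd i f z) \<le> e * \<bar>h\<bar>"
      using h by (simp add: divide_less_eq mult.commute)
  qed (use d in auto)
qed
lemma tri3: "norm (a - b + c) \<le> norm a + norm b + norm (c::'a::real_normed_vector)"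
proof -
  have "norm (a - b + c) \<le> norm (a - b) + norm c" by (rule norm_triangle_ineq)
  also have "norm (a - b) \<le> norm a + norm b" by (rule norm_triangle_ineq4)
  finally show ?thesis by simp
qed

lemma lip_pd1:
  fixes f :: "R2 \<Rightarrow> R2"
  assumes df: "\<And>w. f differentiable (at w)" and d1: "\<And>w. pd 1 f differentiable (at w)"
    and d2: "\<And>w. pd 2 f differentiable (at w)"
    and M1: "\<And>w. w \<in> ball x 1 \<Longrightarrow> norm (pd 1 (pd 1 f) w) \<le> N"
    and M2: "\<And>w. w \<in> ball x 1 \<Longrightarrow> norm (pd 1 (pd 2 f) w) \<le> N"
    and yz: "y \<in> ball x (1/2)" "z \<in> ball x (1/2)"
  shows "norm (pd 1 f z - pd 1 f y) \<le> 2 * N * norm (z - y)"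
proof (rule field_le_epsilon)
  fix e :: real assume e: "0 < e"
  obtain dz where dz: "dz > 0" "\<And>h. h \<noteq> 0 \<and> \<bar>h\<bar> < dz \<Longrightarrow>
     norm (f (z + h *\<^sub>R axis 1 1) - f z - h *\<^sub>R pd 1 f z) \<le> e/2 * \<bar>h\<bar>"
    using dq[OF df, of "e/2" z 1] e by auto
  obtain dy where dy: "dy > 0" "\<And>h. h \<noteq> 0 \<and> \<bar>h\<bar> < dy \<Longrightarrow>
     norm (f (y + h *\<^sub>R axis 1 1) - f y - h *\<^sub>R pd 1 f y) \<le> e/2 * \<bar>h\<bar>"
    using dq[OF df, of "e/2" y 1] e by auto
  define h where "h = min (min dz dy) (1/2) / 2"
  have h: "h > 0" "h < dz" "h < dy" "h < 1/2" unfolding h_def using dz dy by auto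
  define c :: R2 where "c = h *\<^sub>R axis 1 (1::real)"
  have nc: "norm c = h" unfolding c_def using h by simp
  have inb: "w + c \<in> ball x 1" if "w \<in> ball x (1/2)" for w
  proof -
    have "dist x (w + c) \<le> dist x w + dist w (w + c)" by (rule dist_triangle)
    also have "dist w (w + c) = norm c" by (simp add: dist_norm)
    finally have "dist x (w + c) \<le> dist x w + norm c" .
    thus ?thesis using that nc h by auto
  qed
  have inb': "w \<in> ball x 1" if "w \<in> ball x (1/2)" for w using that by auto
  define G where "G = (\<lambda>w. f (w + c) - f w)"
  define G' where "G' = (\<lambda>w v. frechet_derivative f (at (w + c)) v - frechet_derivative f (at w) v)"
  have Gd: "(G has_derivative G' w) (at w)" for w
  proof -
    have a: "(f has_derivative frechet_derivative f (at (w + c))) (at (w + c))"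
      using df frechet_derivative_works by blast
    have b: "(f has_derivative frechet_derivative f (at w)) (at w)"
      using df frechet_derivative_works by blast
    have t: "((\<lambda>w. w + c) has_derivative (\<lambda>v. v)) (at w)"
      by (auto intro!: derivative_eq_intros)
    have "((\<lambda>w. f (w + c)) has_derivative (\<lambda>v. frechet_derivative f (at (w + c)) v)) (at w)"
      using has_derivative_compose[OF t a] by simp
    from has_derivative_diff[OF this b] show ?thesis unfolding G_def G'_def .
  qed
  have Gb: "norm (G z - G y) \<le> 2 * N * h * norm (z - y)"
  proof (rule seg_bound[of "ball x (1/2)" y z G G'])
    fix w assume w: "w \<in> ball x (1/2)"
    show "(G has_derivative G' w) (at w)" by (rule Gd)
    have e1: "norm (pd 1 f (w + c) - pd 1 f w) \<le> h * N"
      using lip1[of "ball x 1" w h 1 "pd 1 f" N] inb[OF w] inb'[OF w] d1 M1 h(1)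
      unfolding c_def by auto
    have e2: "norm (pd 2 f (w + c) - pd 2 f w) \<le> h * N"
      using lip1[of "ball x 1" w h 1 "pd 2 f" N] inb[OF w] inb'[OF w] d2 M2 h(1)
      unfolding c_def by auto
    have "G' w (z - y) = (z - y)$1 *\<^sub>R (pd 1 f (w + c) - pd 1 f w) + (z - y)$2 *\<^sub>R (pd 2 f (w + c) - pd 2 f w)"
      unfolding G'_def fd_expand[OF df] by (simp add: algebra_simps)
    hence "norm (G' w (z - y)) \<le> \<bar>(z - y)$1\<bar> * norm (pd 1 f (w + c) - pd 1 f w) + \<bar>(z - y)$2\<bar> * norm (pd 2 f (w + c) - pd 2 f w)"
      by (metis norm_scaleR norm_triangle_ineq)
    also have "\<dots> \<le> norm (z - y) * (h * N) + norm (z - y) * (h * N)"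
      by (intro add_mono mult_mono component_le_norm_cart e1 e2) auto
    finally show "norm (G' w (z - y)) \<le> 2 * N * h * norm (z - y)" by (simp add: algebra_simps)
  qed (use yz in auto)
  have eq: "h *\<^sub>R (pd 1 f z - pd 1 f y) = (G z - G y)
       - (f (z + c) - f z - h *\<^sub>R pd 1 f z) + (f (y + c) - f y - h *\<^sub>R pd 1 f y)"
    unfolding G_def by (simp add: algebra_simps)
  have "h * norm (pd 1 f z - pd 1 f y) = norm (h *\<^sub>R (pd 1 f z - pd 1 f y))" using h(1) by simp
  also have "\<dots> \<le> norm (G z - G y)
       + norm (f (z + c) - f z - h *\<^sub>R pd 1 f z) + norm (f (y + c) - f y - h *\<^sub>R pd 1 f y)"
    unfolding eq by (rule tri3)
  also have "\<dots> \<le> 2 * N * h * norm (z - y) + e/2 * h + e/2 * h"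
  proof -
    have "norm (f (z + c) - f z - h *\<^sub>R pd 1 f z) \<le> e/2 * h"
      using dz(2)[of h] h unfolding c_def by simp
    moreover have "norm (f (y + c) - f y - h *\<^sub>R pd 1 f y) \<le> e/2 * h"
      using dy(2)[of h] h unfolding c_def by simp
    ultimately show ?thesis using Gb by linarith
  qed
  finally have "h * norm (pd 1 f z - pd 1 f y) \<le> h * (2 * N * norm (z - y) + e)"
    by (simp add: algebra_simps)
  thus "norm (pd 1 f z - pd 1 f y) \<le> 2 * N * norm (z - y) + e" using h(1) by simp
qed
lemma dalpha_simps:
  "dalpha (0,0) f = f" "dalpha (1,0) f = pd 1 f" "dalpha (0,1) f = pd 2 f"
  "dalpha (2,0) f = pd 1 (pd 1 f)" "dalpha (1,1) f = pd 1 (pd 2 f)" "dalpha (0,2) f = pd 2 (pd 2 f)"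
  by (simp_all add: dalpha_def numeral_2_eq_2)

lemma nfun_ge:
  assumes "fst \<alpha> + snd \<alpha> \<le> 3"
  shows "norm (dalpha \<alpha> b y) + norm (dalpha \<alpha> \<sigma> y) \<le> nfun \<sigma> b y"
proof -
  define k where "k = fst \<alpha> + snd \<alpha>"
  define T where "T = (\<lambda>k. \<Sum>\<alpha>\<in>{\<alpha>::nat\<times>nat. fst \<alpha> + snd \<alpha> = k}.
                    norm (dalpha \<alpha> b y) + norm (dalpha \<alpha> \<sigma> y))"
  have fin: "finite {\<alpha>::nat\<times>nat. fst \<alpha> + snd \<alpha> = k}" for k
    by (rule finite_subset[of _ "{..k} \<times> {..k}"]) auto
  have "norm (dalpha \<alpha> b y) + norm (dalpha \<alpha> \<sigma> y) \<le> T k"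
    unfolding T_def by (rule member_le_sum) (auto simp: k_def fin)
  also have "T k \<le> (\<Sum>k\<le>3. T k)"
    by (rule member_le_sum) (auto simp: k_def assms T_def intro!: sum_nonneg)
  finally show ?thesis unfolding nfun_def T_def .
qed

lemma C3_diff:
  assumes "C3 f"
  shows "f differentiable (at y)" "pd i f differentiable (at y)"
proof -
  have "\<forall>is. length is < 3 \<longrightarrow> (\<forall>y. dlist is f differentiable (at y))" using assms C3_def by blast
  from this[rule_format, of "[]"] this[rule_format, of "[i]"]
  show "f differentiable (at y)" "pd i f differentiable (at y)" by auto
qed

lemma lie_expand: "lie g f w = g w$1 *\<^sub>R pd 1 f w + g w$2 *\<^sub>R pd 2 f w"
  by (simp add: lie_def sum_2)

lemma lie_bd:
  assumes "norm (g w) \<le> N" "norm (pd 1 f w) \<le> N" "norm (pd 2 f w) \<le> N"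
  shows "norm (lie g f w) \<le> 2*N^2"
proof -
  have N0: "N \<ge> 0" using assms(1) norm_ge_zero order_trans by blast
  have "norm (lie g f w) \<le> \<bar>g w$1\<bar> * norm (pd 1 f w) + \<bar>g w$2\<bar> * norm (pd 2 f w)"
    unfolding lie_expand by (metis norm_scaleR norm_triangle_ineq)
  also have "\<dots> \<le> N * N + N * N"
    by (intro add_mono mult_mono order_trans[OF component_le_norm_cart assms(1)] assms(2,3)) 
       (auto simp: N0)
  finally show ?thesis by (simp add: power2_eq_square)
qed

lemma lie_lip:
  assumes "norm (g z - g y) \<le> A" "norm (pd 1 f z - pd 1 f y) \<le> A" "norm (pd 2 f z - pd 2 f y) \<le> A"
    "norm (g y) \<le> N" "norm (pd 1 f z) \<le> N" "norm (pd 2 f z) \<le> N"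
  shows "norm (lie g f z - lie g f y) \<le> 4*N*A"
proof -
  have N0: "N \<ge> 0" using assms(4) norm_ge_zero order_trans by blast
  have A0: "A \<ge> 0" using assms(1) norm_ge_zero order_trans by blast
  have eq: "lie g f z - lie g f y = ((g z - g y)$1 *\<^sub>R pd 1 f z + g y$1 *\<^sub>R (pd 1 f z - pd 1 f y))
      + ((g z - g y)$2 *\<^sub>R pd 2 f z + g y$2 *\<^sub>R (pd 2 f z - pd 2 f y))"
    unfolding lie_expand by (simp add: algebra_simps)
  have t: "norm (u$i *\<^sub>R p + v$i *\<^sub>R q) \<le> A * N + N * A"
    if "norm u \<le> A" "norm p \<le> N" "norm v \<le> N" "norm q \<le> A" for u v :: R2 and p q :: R2 and i
  proof -
    have "norm (u$i *\<^sub>R p + v$i *\<^sub>R q) \<le> \<bar>u$i\<bar> * norm p + \<bar>v$i\<bar> * norm q"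
      by (metis norm_scaleR norm_triangle_ineq)
    also have "\<dots> \<le> A * N + N * A"
      by (intro add_mono mult_mono order_trans[OF component_le_norm_cart] that)
         (auto simp: N0 A0)
    finally show ?thesis .
  qed
  have "norm (lie g f z - lie g f y) \<le> (A * N + N * A) + (A * N + N * A)"
    unfolding eq by (rule order_trans[OF norm_triangle_ineq add_mono]) (rule t; fact assms)+
  thus ?thesis by (simp add: algebra_simps)
qed
lemma main_lemma:
  fixes \<sigma> b :: "R2 \<Rightarrow> R2"
  assumes C: "C3 \<sigma>" "C3 b" and NL: "0 < \<Lambda>" "\<Lambda> \<le> 1" "1 \<le> N"
    and bd: "\<And>y. y \<in> ball x 1 \<Longrightarrow> \<Lambda> \<le> lam \<sigma> b y \<and> nfun \<sigma> b y \<le> N"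
    and d: "0 < \<delta>" "\<delta> \<le> 1 / (512 * (N / \<Lambda>) powr 5)"
  shows "mnorm (Adelta \<sigma> b \<delta> x) \<xi> \<le> (448 * (N/\<Lambda>)^5) * mnorm (Abar \<sigma> b \<delta> x) \<xi>"
    "mnorm (Abar \<sigma> b \<delta> x) \<xi> \<le> (448 * (N/\<Lambda>)^5) * mnorm (Adelta \<sigma> b \<delta> x) \<xi>"
    "mnorm (Adelta \<sigma> b \<delta> x) \<xi> \<le> (448 * (N/\<Lambda>)^5) * mnorm (Adelta \<sigma> b \<delta> (x + \<delta> *\<^sub>R b x)) \<xi>"
    "mnorm (Adelta \<sigma> b \<delta> (x + \<delta> *\<^sub>R b x)) \<xi> \<le> (448 * (N/\<Lambda>)^5) * mnorm (Adelta \<sigma> b \<delta> x) \<xi>"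
proof -
  have R0: "N / \<Lambda> > 0" using NL by simp
  have N5: "N^5 \<ge> 1" using NL by simp
  have d2: "\<delta> \<le> \<Lambda> / (512 * N^5)"
  proof -
    have "1 / (512 * (N / \<Lambda>) powr 5) = \<Lambda>^5 / (512 * N^5)"
      using R0 by (simp add: powr_realpow power_divide)
    also have "\<dots> \<le> \<Lambda> / (512 * N^5)"
    proof -
      have "\<Lambda>^5 \<le> \<Lambda>" using NL by (simp add: power_le_one_iff power_decreasing[of 1 5 \<Lambda>, simplified])
      moreover have "0 \<le> 512 * N^5" using N5 by linarith
      ultimately show ?thesis by (rule divide_right_mono)
    qed
    finally show ?thesis using d by linarith
  qed
  have d1: "\<delta> \<le> 1"
  proof -
    have p: "0 < 512 * N^5" using N5 by linarith
    have "\<Lambda> \<le> 512 * N^5" using N5 NL(2) by linarith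
    hence "\<Lambda> / (512 * N^5) \<le> 1" using p by (simp add: divide_le_eq)
    thus ?thesis using d2 by linarith
  qed
  have dN: "\<delta> * N \<le> 1/512"
  proof -
    have "\<delta> * N \<le> \<Lambda> / (512 * N^5) * N" using d2 NL by (intro mult_right_mono) auto
    also have "\<dots> = \<Lambda> / (512 * N^4)" using NL by (simp add: field_simps eval_nat_numeral)
    also have "\<dots> \<le> 1 / 512"
    proof -
      have "1 \<le> N^4" using NL by simp
      hence "\<Lambda> \<le> N^4" using NL by linarith
      thus ?thesis using NL by (simp add: divide_le_eq)
    qed
    finally show ?thesis .
  qed
  define a where "a = \<delta> powr (1/2)"
  have a0: "a > 0" unfolding a_def using d by simp
  have a32: "\<delta> powr (3/2) = \<delta> * a"
    unfolding a_def using powr_add[of \<delta> 1 "1/2"] d by simp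
  have nb: "norm (dalpha \<alpha> \<sigma> w) \<le> N \<and> norm (dalpha \<alpha> b w) \<le> N"
    if "w \<in> ball x 1" "fst \<alpha> + snd \<alpha> \<le> 3" for w \<alpha>
    using nfun_ge[OF that(2), of b w \<sigma>] bd[OF that(1)] norm_ge_zero[of "dalpha \<alpha> \<sigma> w"]
      norm_ge_zero[of "dalpha \<alpha> b w"] by linarith
  have bs: "norm (\<sigma> w) \<le> N" "norm (pd 1 \<sigma> w) \<le> N" "norm (pd 2 \<sigma> w) \<le> N"
     "norm (pd 1 (pd 1 \<sigma>) w) \<le> N" "norm (pd 1 (pd 2 \<sigma>) w) \<le> N" "norm (pd 2 (pd 2 \<sigma>) w) \<le> N"
     "norm (b w) \<le> N" "norm (pd 1 b w) \<le> N" "norm (pd 2 b w) \<le> N"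
     "norm (pd 1 (pd 1 b) w) \<le> N" "norm (pd 1 (pd 2 b) w) \<le> N" "norm (pd 2 (pd 2 b) w) \<le> N"
    if "w \<in> ball x 1" for w
    using nb[OF that, of "(0,0)"] nb[OF that, of "(1,0)"] nb[OF that, of "(0,1)"]
      nb[OF that, of "(2,0)"] nb[OF that, of "(1,1)"] nb[OF that, of "(0,2)"]
    unfolding dalpha_simps by simp_all
  have brk: "bracket b \<sigma> w = lie \<sigma> b w - lie b \<sigma> w" for w unfolding bracket_def ..
  have lbs: "norm (lie \<sigma> b w) \<le> 2*N^2" "norm (lie b \<sigma> w) \<le> 2*N^2" if "w \<in> ball x 1" for w
    using lie_bd bs[OF that] by auto
  have brb: "norm (bracket b \<sigma> w) \<le> 4*N^2" if "w \<in> ball x 1" for w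
  proof -
    have "norm (bracket b \<sigma> w) \<le> norm (lie \<sigma> b w) + norm (lie b \<sigma> w)"
      unfolding brk by (rule norm_triangle_ineq4)
    thus ?thesis using lbs[OF that] by linarith
  qed
  have xin: "x \<in> ball x 1" by simp
  have Dx: "\<bar>det2 (\<sigma> x) (bracket b \<sigma> x)\<bar> \<ge> \<Lambda>"
    using lam_det[of \<Lambda> "Amat \<sigma> b x"] bd[OF xin] NL unfolding lam_def Amat_def det_cols2 by simp
  have NN: "N \<le> 4 * N^2"
  proof -
    have "N * 1 \<le> N * (4*N)" using NL by (intro mult_left_mono) auto
    thus ?thesis by (simp add: power2_eq_square)
  qed
  have N23: "2*N^2 \<le> 16*N^3"
  proof -
    have "N^2 * 2 \<le> N^2 * (16*N)" using NL by (intro mult_left_mono) auto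
    thus ?thesis by (simp add: eval_nat_numeral algebra_simps)
  qed
  have AdE: "Adelta \<sigma> b \<delta> y = cols2 (a *\<^sub>R \<sigma> y) ((\<delta> * a) *\<^sub>R bracket b \<sigma> y)" for y
    unfolding Adelta_def a_def[symmetric] a32 ..
  have AbE: "Abar \<sigma> b \<delta> x = cols2 (a *\<^sub>R (\<sigma> x + \<delta> *\<^sub>R lie b \<sigma> x)) ((\<delta> * a) *\<^sub>R bracket b \<sigma> x)"
    unfolding Abar_def a_def[symmetric] a32 ..
  have p1s: "norm (\<sigma> x + \<delta> *\<^sub>R lie b \<sigma> x - \<sigma> x) \<le> 16*N^3 * \<delta>"
  proof -
    have "norm (\<sigma> x + \<delta> *\<^sub>R lie b \<sigma> x - \<sigma> x) = \<delta> * norm (lie b \<sigma> x)" using d by simp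
    also have "\<dots> \<le> \<delta> * (16 * N^3)" using lbs(2)[OF xin] N23 d by (intro mult_left_mono) auto
    finally show ?thesis by (simp add: mult.commute)
  qed
  have p1n: "norm (\<sigma> x + \<delta> *\<^sub>R lie b \<sigma> x) \<le> 4*N^2"
  proof -
    have t1: "norm (\<sigma> x + \<delta> *\<^sub>R lie b \<sigma> x) \<le> norm (\<sigma> x) + \<delta> * norm (lie b \<sigma> x)"
      using d norm_triangle_ineq[of "\<sigma> x" "\<delta> *\<^sub>R lie b \<sigma> x"] by simp
    have t2: "\<delta> * norm (lie b \<sigma> x) \<le> 1 * (2*N^2)" using lbs(2)[OF xin] d d1
      by (intro mult_mono) auto
    have t3: "N \<le> 2*N^2"
    proof -
      have "N * 1 \<le> N * (2*N)" using NL by (intro mult_left_mono) auto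
      thus ?thesis by (simp add: power2_eq_square)
    qed
    show ?thesis using t1 t2 t3 bs(1)[OF xin] by linarith
  qed
  have E0: "norm (bracket b \<sigma> x - bracket b \<sigma> x) \<le> 16*N^3 * \<delta>" using NL d by simp
  note pair1 = core_both[OF NL(3,1,2) Dx order_trans[OF bs(1)[OF xin] NN] brb[OF xin] p1n brb[OF xin] p1s E0 d(1) d2 a0, of \<xi>]
  show "mnorm (Adelta \<sigma> b \<delta> x) \<xi> \<le> (448 * (N/\<Lambda>)^5) * mnorm (Abar \<sigma> b \<delta> x) \<xi>"
    unfolding AdE AbE using pair1(1) .
  show "mnorm (Abar \<sigma> b \<delta> x) \<xi> \<le> (448 * (N/\<Lambda>)^5) * mnorm (Adelta \<sigma> b \<delta> x) \<xi>"
    unfolding AdE AbE using pair1(2) .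
  define xh where "xh = x + \<delta> *\<^sub>R b x"
  define \<rho> where "\<rho> = norm (xh - x)"
  have \<rho>N: "\<rho> \<le> \<delta> * N"
    unfolding \<rho>_def xh_def using bs(7)[OF xin] d by (simp add: mult_left_mono)
  have xh2: "xh \<in> ball x (1/2)"
  proof -
    have "dist x xh = \<rho>" unfolding \<rho>_def by (simp add: dist_norm norm_minus_commute)
    thus ?thesis using \<rho>N dN by simp
  qed
  have x2: "x \<in> ball x (1/2)" by simp
  have xh1: "xh \<in> ball x 1" using xh2 by auto
  have dfs: "\<And>w. \<sigma> differentiable (at w)" "\<And>w i. pd i \<sigma> differentiable (at w)"
    using C3_diff[OF C(1)] by auto
  have dfb: "\<And>w. b differentiable (at w)" "\<And>w i. pd i b differentiable (at w)"
    using C3_diff[OF C(2)] by auto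
  have cb: "convex (ball x (1::real))" by simp
  define A where "A = 2 * N * \<rho>"
  have Ls: "norm (\<sigma> xh - \<sigma> x) \<le> A" unfolding A_def \<rho>_def
    by (rule lip2[OF cb xin xh1]) (use dfs bs in auto)
  have Lb: "norm (b xh - b x) \<le> A" unfolding A_def \<rho>_def
    by (rule lip2[OF cb xin xh1]) (use dfb bs in auto)
  have L2s: "norm (pd 2 \<sigma> xh - pd 2 \<sigma> x) \<le> A" unfolding A_def \<rho>_def
    by (rule lip2[OF cb xin xh1]) (use dfs bs in auto)
  have L2b: "norm (pd 2 b xh - pd 2 b x) \<le> A" unfolding A_def \<rho>_def
    by (rule lip2[OF cb xin xh1]) (use dfb bs in auto)
  have L1s: "norm (pd 1 \<sigma> xh - pd 1 \<sigma> x) \<le> A" unfolding A_def \<rho>_def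
    by (rule lip_pd1[OF dfs(1) dfs(2) dfs(2) _ _ x2 xh2]) (use bs in auto)
  have L1b: "norm (pd 1 b xh - pd 1 b x) \<le> A" unfolding A_def \<rho>_def
    by (rule lip_pd1[OF dfb(1) dfb(2) dfb(2) _ _ x2 xh2]) (use bs in auto)
  have l1: "norm (lie \<sigma> b xh - lie \<sigma> b x) \<le> 4*N*A"
    by (rule lie_lip[OF Ls L1b L2b]) (use bs xin xh1 in auto)
  have l2: "norm (lie b \<sigma> xh - lie b \<sigma> x) \<le> 4*N*A"
    by (rule lie_lip[OF Lb L1s L2s]) (use bs xin xh1 in auto)
  have NA: "N * A \<le> 2 * N^3 * \<delta>"
  proof -
    have "N * A = 2 * N * (N * \<rho>)" unfolding A_def by (simp add: algebra_simps)
    also have "N * \<rho> \<le> N * (\<delta> * N)" using \<rho>N NL by (intro mult_left_mono) auto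
    finally show ?thesis using NL by (simp add: eval_nat_numeral algebra_simps mult_left_mono)
  qed
  have E2: "norm (bracket b \<sigma> xh - bracket b \<sigma> x) \<le> 16*N^3 * \<delta>"
  proof -
    have "bracket b \<sigma> xh - bracket b \<sigma> x = (lie \<sigma> b xh - lie \<sigma> b x) - (lie b \<sigma> xh - lie b \<sigma> x)"
      unfolding brk by (simp add: algebra_simps)
    hence "norm (bracket b \<sigma> xh - bracket b \<sigma> x) \<le> norm (lie \<sigma> b xh - lie \<sigma> b x) + norm (lie b \<sigma> xh - lie b \<sigma> x)"
      by (simp add: norm_triangle_ineq4)
    hence "norm (bracket b \<sigma> xh - bracket b \<sigma> x) \<le> 4*N*A + 4*N*A"
      using l1 l2 by linarith
    thus ?thesis using NA by linarith
  qed
  have E1: "norm (\<sigma> xh - \<sigma> x) \<le> 16*N^3 * \<delta>"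
  proof -
    have A0: "A \<ge> 0" unfolding A_def \<rho>_def using NL by simp
    have "1 * A \<le> N * A" using NL A0 by (intro mult_right_mono) auto
    moreover have "0 \<le> N^3 * \<delta>" using NL d by simp
    ultimately show ?thesis using Ls NA by linarith
  qed
  note pair2 = core_both[OF NL(3,1,2) Dx order_trans[OF bs(1)[OF xin] NN] brb[OF xin]
      order_trans[OF bs(1)[OF xh1] NN] brb[OF xh1] E1 E2 d(1) d2 a0, of \<xi>]
  show "mnorm (Adelta \<sigma> b \<delta> x) \<xi> \<le> (448 * (N/\<Lambda>)^5) * mnorm (Adelta \<sigma> b \<delta> (x + \<delta> *\<^sub>R b x)) \<xi>"
    unfolding AdE xh_def[symmetric] using pair2(1) .
  show "mnorm (Adelta \<sigma> b \<delta> (x + \<delta> *\<^sub>R b x)) \<xi> \<le> (448 * (N/\<Lambda>)^5) * mnorm (Adelta \<sigma> b \<delta> x) \<xi>"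
    unfolding AdE xh_def[symmetric] using pair2(2) .
qed
lemma lemmaA3_inst:
  "\<forall>(\<sigma>::R2 \<Rightarrow> R2) (b::R2 \<Rightarrow> R2) (x::R2) (N::real) (\<Lambda>::real) (\<kappa>::R2 \<Rightarrow> real).
       C3 \<sigma> \<and> C3 b \<and> 0 < \<Lambda> \<and> \<Lambda> \<le> 1 \<and> 1 \<le> N \<and>
       (\<forall>y \<in> ball x 1. \<Lambda> \<le> lam \<sigma> b y \<and> nfun \<sigma> b y \<le> N \<and>
          \<kappa> differentiable (at y) \<and> lie \<sigma> \<sigma> y = \<kappa> y *\<^sub>R \<sigma> y \<and>
          \<bar>\<kappa> y\<bar> \<le> nfun \<sigma> b y \<and> norm (grad \<kappa> y) \<le> nfun \<sigma> b y)
     \<longrightarrow> (\<forall>\<delta>::real. 0 < \<delta> \<and> \<delta> \<le> 1 / (512 * (N / \<Lambda>) powr 5) \<longrightarrow>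
           (\<forall>\<xi>::R2.
              mnorm (Adelta \<sigma> b \<delta> x) \<xi> / (448 * (N / \<Lambda>) powr 5) \<le> mnorm (Abar \<sigma> b \<delta> x) \<xi>
            \<and> mnorm (Abar \<sigma> b \<delta> x) \<xi> \<le> (448 * (N / \<Lambda>) powr 5) * mnorm (Adelta \<sigma> b \<delta> x) \<xi>
            \<and> mnorm (Adelta \<sigma> b \<delta> x) \<xi> / (448 * (N / \<Lambda>) powr 5) \<le> mnorm (Adelta \<sigma> b \<delta> (x + \<delta> *\<^sub>R b x)) \<xi>
            \<and> mnorm (Adelta \<sigma> b \<delta> (x + \<delta> *\<^sub>R b x)) \<xi> \<le> (448 * (N / \<Lambda>) powr 5) * mnorm (Adelta \<sigma> b \<delta> x) \<xi>))"
  apply (intro allI impI)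
  apply (elim conjE)
  subgoal premises P for \<sigma> b x N \<Lambda> \<kappa> \<delta> \<xi>
  proof -
    have bd: "\<And>y. y \<in> ball x 1 \<Longrightarrow> \<Lambda> \<le> lam \<sigma> b y \<and> nfun \<sigma> b y \<le> N"
      using P by blast
    have h: "C3 \<sigma>" "C3 b" "0 < \<Lambda>" "\<Lambda> \<le> 1" "1 \<le> N" "0 < \<delta>" "\<delta> \<le> 1 / (512 * (N / \<Lambda>) powr 5)"
      using P by blast+
    note M = main_lemma[where x=x and \<xi>=\<xi>, OF h(1,2,3,4,5) bd h(6,7)]
    have R: "(N / \<Lambda>) powr 5 = (N / \<Lambda>)^5" using h(3,5) by (simp add: powr_realpow)
    have Cp: "0 < 448 * (N / \<Lambda>)^5" using h(3,5) by simp
    show ?thesis unfolding R using M Cp by (simp add: pos_divide_le_eq mult.commute)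
  qed
  done

theorem lemmaA3:
  shows "\<exists>K1 q1 K2 q2 :: real. K1 \<ge> 1 \<and> q1 \<ge> 1 \<and> K2 \<ge> 1 \<and> q2 \<ge> 1 \<and>
    (\<forall>(\<sigma>::R2 \<Rightarrow> R2) (b::R2 \<Rightarrow> R2) (x::R2) (N::real) (\<Lambda>::real) (\<kappa>::R2 \<Rightarrow> real).
       C3 \<sigma> \<and> C3 b \<and> 0 < \<Lambda> \<and> \<Lambda> \<le> 1 \<and> 1 \<le> N \<and>
       (\<forall>y \<in> ball x 1. \<Lambda> \<le> lam \<sigma> b y \<and> nfun \<sigma> b y \<le> N \<and>
          \<kappa> differentiable (at y) \<and> lie \<sigma> \<sigma> y = \<kappa> y *\<^sub>R \<sigma> y \<and>
          \<bar>\<kappa> y\<bar> \<le> nfun \<sigma> b y \<and> norm (grad \<kappa> y) \<le> nfun \<sigma> b y)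
     \<longrightarrow> (\<forall>\<delta>::real. 0 < \<delta> \<and> \<delta> \<le> 1 / (K2 * (N / \<Lambda>) powr q2) \<longrightarrow>
           (\<forall>\<xi>::R2.
              mnorm (Adelta \<sigma> b \<delta> x) \<xi> / (K1 * (N / \<Lambda>) powr q1) \<le> mnorm (Abar \<sigma> b \<delta> x) \<xi>
            \<and> mnorm (Abar \<sigma> b \<delta> x) \<xi> \<le> (K1 * (N / \<Lambda>) powr q1) * mnorm (Adelta \<sigma> b \<delta> x) \<xi>
            \<and> mnorm (Adelta \<sigma> b \<delta> x) \<xi> / (K1 * (N / \<Lambda>) powr q1) \<le> mnorm (Adelta \<sigma> b \<delta> (x + \<delta> *\<^sub>R b x)) \<xi>
            \<and> mnorm (Adelta \<sigma> b \<delta> (x + \<delta> *\<^sub>R b x)) \<xi> \<le> (K1 * (N / \<Lambda>) powr q1) * mnorm (Adelta \<sigma> b \<delta> x) \<xi>)))"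
  apply (rule exI[of _ 448], rule exI[of _ 5], rule exI[of _ 512], rule exI[of _ 5])
  apply (intro conjI)
      apply simp
     apply simp
    apply simp
   apply simp
  apply (rule lemmaA3_inst)
  done

end
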